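(* Let $s,m$ be positive integers with $m$ odd, and let $n=sm$. Let $F\in\mathbb{F}_{2^s}[x]$ be a polynomial which, viewed as a function $\mathbb{F}_{2^n}\to\mathbb{F}_{2^n}$, is differentially $(1,4)$-uniform, i.e. $\delta_{F,1}=4$. Then for all $a,b\in\mathbb{F}_{2^s}$ with $a\neq 0$, the equation $F(x+a)+F(x)=b$ has no solution $x\in\mathbb{F}_{2^n}\setminus\mathbb{F}_{2^s}$.
   Context: For a function $F:\mathbb{F}_{p^n}\to\mathbb{F}_{p^n}$ and $c\in\mathbb{F}_{p^n}$, let ${}_c\Delta_F(a,b)=\#\{x\in\mathbb{F}_{p^n}: F(x+a)-cF(x)=b\}$, and the $c$-differential uniformity of $F$ is $\delta_{F,c}=\max\{{}_c\Delta_F(a,b): a,b\in\mathbb{F}_{p^n},\ a\neq 0 \text{ if } c=1\}$. $F$ is called differentially $(c,\delta)$-uniform if $\delta_{F,c}=\delta$. *)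

theory Defs
  imports "HOL-Computational_Algebra.Polynomial"
begin

definition c_Delta :: "'a::{field,finite} \<Rightarrow> ('a \<Rightarrow> 'a) \<Rightarrow> 'a \<Rightarrow> 'a \<Rightarrow> nat" where
  "c_Delta c F a b = card {x. F (x + a) - c * F x = b}"

definition c_diff_uniformity :: "'a::{field,finite} \<Rightarrow> ('a \<Rightarrow> 'a) \<Rightarrow> nat" where
  "c_diff_uniformity c F = Max {c_Delta c F a b | a b. a \<noteq> 0 \<or> c \<noteq> 1}"

text \<open>The subfield of order q^s inside a finite field: roots of X^(q^s) - X.\<close>
definition subfield_pow :: "nat \<Rightarrow> nat \<Rightarrow> 'a::field set" where
  "subfield_pow q s = {x. x ^ (q ^ s) = x}"

end

theory Submission
  imports Defs
begin

lemma fermat_field: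
  fixes x :: "'a::{field,finite}"
  shows "x ^ card (UNIV :: 'a set) = x"
proof (cases "x = 0")
  case False
  define k where "k = card (UNIV - {0::'a})"
  have "(\<Prod>y\<in>UNIV-{0}. x * y) = (\<Prod>y\<in>UNIV-{0}. y)"
    by (rule prod.reindex_bij_witness[of _ "\<lambda>y. y / x" "\<lambda>y. x * y"]) (use False in auto)
  moreover have "(\<Prod>y\<in>UNIV-{0}. x * y) = x ^ k * (\<Prod>y\<in>UNIV-{0}. y)"
    unfolding k_def by (simp add: prod.distrib)
  moreover have "(\<Prod>y\<in>UNIV-{0::'a}. y) \<noteq> 0" by simp
  ultimately have xk: "x ^ k = 1" by simp
  have ck: "k = card (UNIV :: 'a set) - 1" unfolding k_def by (rule card_Diff_singleton) simp
  have pos: "card (UNIV :: 'a set) > 0" by (rule finite_UNIV_card_ge_0) simp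
  have "card (UNIV :: 'a set) = Suc k" using ck pos by linarith
  then have "x ^ card (UNIV :: 'a set) = x * x ^ k" by (simp only: power_Suc)
  then show ?thesis using xk by simp
next
  case True
  have "card (UNIV :: 'a set) > 0" by (rule finite_UNIV_card_ge_0) simp
  then show ?thesis using True by simp
qed

lemma char2_field:
  assumes "card (UNIV :: 'a::{field,finite} set) = 2 ^ n" and "n > 0"
  shows "(1::'a) + 1 = 0"
proof -
  have f: "(-1::'a) ^ (2 ^ n) = -1" using fermat_field[of "-1::'a"] unfolding assms(1) .
  have ev: "even ((2::nat) ^ n)" using assms(2) by simp
  have "(-1::'a) ^ (2 ^ n) = 1" using neg_one_even_power[OF ev] .
  then have "(1::'a) = -1" using f by simp
  then have "(1::'a) + 1 = 1 + (-1)" by (rule arg_cong)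
  then show ?thesis by simp
qed

lemma frob_add:
  fixes u v :: "'a::field"
  assumes "(1::'a) + 1 = 0"
  shows "(u + v) ^ (2 ^ t) = u ^ (2 ^ t) + v ^ (2 ^ t)"
proof (induction t)
  case 0 then show ?case by simp
next
  case (Suc t)
  have two: "(2::'a) = 0" using assms by (metis one_add_one)
  have sq: "(A + B)^2 = A^2 + B^2" for A B :: 'a
  proof -
    have "(A + B)^2 = A^2 + 2 * A * B + B^2" by (simp only: power2_eq_square) (simp add: algebra_simps)
    also have "\<dots> = A^2 + B^2" using two by simp
    finally show ?thesis .
  qed
  have pw: "w ^ (2 ^ Suc t) = (w ^ (2 ^ t))^2" for w :: 'a
    by (simp only: power_Suc2 power_mult)
  have "(u + v) ^ (2 ^ Suc t) = ((u + v) ^ (2 ^ t))^2" by (rule pw)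
  also have "\<dots> = (u ^ (2 ^ t) + v ^ (2 ^ t))^2" by (simp only: Suc.IH)
  also have "\<dots> = (u ^ (2 ^ t))^2 + (v ^ (2 ^ t))^2" by (rule sq)
  also have "\<dots> = u ^ (2 ^ Suc t) + v ^ (2 ^ Suc t)" by (simp only: pw)
  finally show ?case .
qed

lemma iter_fix:
  fixes y a :: "'a::field"
  assumes "(1::'a) + 1 = 0" and "y ^ (2 ^ t) = y + a" and "a ^ (2 ^ t) = a"
  shows "y ^ (2 ^ (t * k)) = (if even k then y else y + a)"
proof (induction k)
  case 0 then show ?case by simp
next
  case (Suc k)
  have aa: "a + a = 0" using assms(1) by (metis distrib_left mult_1_right mult_zero_right)
  have "y ^ (2 ^ (t * Suc k)) = (y ^ (2 ^ (t * k))) ^ (2 ^ t)"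
    by (simp add: power_mult[symmetric] power_add mult.commute)
  also have "\<dots> = (if even (Suc k) then y else y + a)"
  proof (cases "even k")
    case True
    then show ?thesis using Suc.IH assms(2) by simp
  next
    case False
    have "(y ^ (2 ^ (t * k))) ^ (2 ^ t) = (y + a) ^ (2 ^ t)" using Suc.IH False by simp
    also have "\<dots> = y + a + a" using frob_add[OF assms(1)] assms(2,3) by simp
    also have "\<dots> = y" using aa by (simp add: add.assoc)
    finally show ?thesis using False by simp
  qed
  finally show ?case .
qed

lemma poly_frob:
  fixes F :: "'a::field poly"
  assumes "(1::'a) + 1 = 0" and "\<forall>i. coeff F i ^ (2 ^ s) = coeff F i"
  shows "poly F (y ^ (2 ^ s)) = (poly F y) ^ (2 ^ s)"
  using assms(2)
proof (induction F rule: pCons_induct)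
  case 0 then show ?case by simp
next
  case (pCons c p)
  have hc: "c ^ (2 ^ s) = c" using pCons.prems by (metis coeff_pCons_0)
  have hp: "\<forall>i. coeff p i ^ (2 ^ s) = coeff p i" using pCons.prems by (metis coeff_pCons_Suc)
  have "poly (pCons c p) y ^ (2 ^ s) = c ^ (2 ^ s) + (y * poly p y) ^ (2 ^ s)"
    by (simp add: frob_add[OF assms(1)])
  also have "\<dots> = c + y ^ (2 ^ s) * poly p (y ^ (2 ^ s))"
    using hc pCons.IH[OF hp] by (simp add: power_mult_distrib)
  finally show ?case by simp
qed

theorem proposition2p1:
  fixes F :: "'a::{field,finite} poly" and s m n :: nat
  assumes "card (UNIV :: 'a set) = 2 ^ n" and "n = s * m" and "s > 0" and "m > 0" and "odd m"
    and "\<forall>i. coeff F i \<in> subfield_pow 2 s"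
    and "c_diff_uniformity 1 (poly F) = 4"
  shows "\<forall>a \<in> subfield_pow 2 s. \<forall>b \<in> subfield_pow 2 s. a \<noteq> 0 \<longrightarrow>
           (\<forall>x. x \<notin> subfield_pow 2 s \<longrightarrow> poly F (x + a) + poly F x \<noteq> b)"
proof (intro ballI impI allI notI)
  fix a b x :: 'a
  assume aK: "a \<in> subfield_pow 2 s" and bK: "b \<in> subfield_pow 2 s" and a0: "a \<noteq> 0"
    and xK: "x \<notin> subfield_pow 2 s" and eq: "poly F (x + a) + poly F x = b"
  have npos: "n > 0" using assms by simp
  have c2: "(1::'a) + 1 = 0" using char2_field[OF assms(1) npos] .
  have dbl: "u + u = 0" for u :: 'a using c2 by (metis distrib_left mult_1_right mult_zero_right)
  have neg: "- u = u" for u :: 'a using dbl[of u] by (simp add: add_eq_0_iff2)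
  have mp: "u - v = u + v" for u v :: 'a using neg[of v] by (metis diff_conv_add_uminus)
  have aa: "w + a + a = w" for w :: 'a by (simp add: add.assoc dbl)
  have swap: "u + a = v \<longleftrightarrow> v + a = u" for u v :: 'a
    using aa[of u] aa[of v] by metis
  define \<sigma> where "\<sigma> = (\<lambda>y::'a. y ^ (2 ^ s))"
  have sadd: "\<sigma> (u + v) = \<sigma> u + \<sigma> v" for u v using frob_add[OF c2] by (simp add: \<sigma>_def)
  have sa: "\<sigma> a = a" using aK by (simp add: subfield_pow_def \<sigma>_def)
  have sb: "\<sigma> b = b" using bK by (simp add: subfield_pow_def \<sigma>_def)
  have sx: "\<sigma> x \<noteq> x" using xK by (simp add: subfield_pow_def \<sigma>_def)
  have coefs: "\<forall>i. coeff F i ^ (2 ^ s) = coeff F i" using assms(6) by (simp add: subfield_pow_def)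
  have spoly: "poly F (\<sigma> y) = \<sigma> (poly F y)" for y
    using poly_frob[OF c2 coefs] by (simp add: \<sigma>_def)
  have sinj: "\<sigma> u = \<sigma> v \<Longrightarrow> u = v" for u v
  proof -
    assume "\<sigma> u = \<sigma> v"
    then have "\<sigma> (u + v) = 0" using sadd dbl by simp
    then have "u + v = 0" by (simp add: \<sigma>_def)
    moreover have "u = (u + v) + v" by (simp add: add.assoc dbl)
    ultimately show "u = v" by simp
  qed
  have ferm: "z ^ (2 ^ n) = z" for z :: 'a using fermat_field[of z] assms(1) by simp
  have full: "y ^ (2 ^ (s * m * r)) = y" for y :: 'a and r
  proof -
    have "y ^ ((2 ^ n) ^ r) = y"
      by (induction r) (simp_all add: power_mult ferm)
    moreover have "(2::nat) ^ (s * m * r) = (2 ^ n) ^ r" by (simp add: assms(2) power_mult)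
    ultimately show ?thesis by simp
  qed
  have noshift: "y ^ (2 ^ (s * r)) \<noteq> y + a" for y r
  proof
    assume h: "y ^ (2 ^ (s * r)) = y + a"
    have ar: "a ^ (2 ^ (s * r)) = a"
      using iter_fix[OF c2, of a s 0 r] sa by (simp add: \<sigma>_def)
    have "y ^ (2 ^ (s * r * m)) = y + a" using iter_fix[OF c2 h ar, of m] assms(5) by simp
    moreover have "y ^ (2 ^ (s * r * m)) = y" using full[of y r] by (simp add: mult_ac)
    ultimately show False using a0 by simp
  qed
  define S where "S = {z. poly F (z + a) - 1 * poly F z = b}"
  have solS: "z \<in> S \<longleftrightarrow> poly F (z + a) + poly F z = b" for z by (simp add: S_def mp)
  have sol_a: "z \<in> S \<Longrightarrow> z + a \<in> S" for z
  proof -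
    assume "z \<in> S"
    then have "poly F (z + a) + poly F z = b" by (simp add: solS)
    moreover have "poly F (z + a + a) = poly F z" by (simp only: aa)
    ultimately have "poly F (z + a + a) + poly F (z + a) = b" by (metis add.commute)
    then show "z + a \<in> S" by (simp only: solS)
  qed
  have sol_s: "z \<in> S \<Longrightarrow> \<sigma> z \<in> S" for z
  proof -
    assume "z \<in> S"
    then have "poly F (z + a) + poly F z = b" by (simp add: solS)
    then have "\<sigma> (poly F (z + a) + poly F z) = b" using sb by simp
    then have "\<sigma> (poly F (z + a)) + \<sigma> (poly F z) = b" by (simp only: sadd)
    moreover have "\<sigma> (z + a) = \<sigma> z + a" by (simp only: sadd sa)
    ultimately have "poly F (\<sigma> z + a) + poly F (\<sigma> z) = b" by (metis spoly)
    then show "\<sigma> z \<in> S" by (simp only: solS)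
  qed
  define x1 where "x1 = \<sigma> x"
  define x2 where "x2 = \<sigma> x1"
  have x0S: "x \<in> S" using eq solS by simp
  have x1S: "x1 \<in> S" using sol_s[OF x0S] x1_def by simp
  have x2S: "x2 \<in> S" using sol_s[OF x1S] x2_def by simp
  have sub: "{x, x + a, x1, x1 + a, x2, x2 + a} \<subseteq> S" using x0S x1S x2S sol_a by auto
  have n01: "x \<noteq> x1" using sx x1_def by simp
  have n12: "x1 \<noteq> x2" using n01 sinj unfolding x1_def x2_def by blast
  have x2e: "x2 = x ^ (2 ^ (s * 2))"
    by (simp add: x2_def x1_def \<sigma>_def power_mult[symmetric] power_add mult_2_right)
  have x1e: "x1 = x ^ (2 ^ (s * 1))" by (simp add: x1_def \<sigma>_def)
  have n02: "x \<noteq> x2"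
  proof
    assume h: "x = x2"
    obtain k where mk: "m = 2 * k + 1" using assms(5) oddE by blast
    have "x ^ (2 ^ (s * 2)) = x + 0" using h x2e by simp
    from iter_fix[OF c2 this, of k] have hk: "x ^ (2 ^ (s * 2 * k)) = x" by simp
    have "x ^ (2 ^ (s * m * 1)) = x" using full by blast
    moreover have "x ^ (2 ^ (s * m * 1)) = (x ^ (2 ^ (s * 2 * k))) ^ (2 ^ s)"
    proof -
      have "(2::nat) ^ (s * m * 1) = 2 ^ (s * 2 * k) * 2 ^ s"
        by (simp add: mk power_add[symmetric] algebra_simps)
      then show ?thesis by (simp only: power_mult)
    qed
    ultimately have "x ^ (2 ^ s) = x" using hk by simp
    then show False using sx by (simp add: \<sigma>_def)
  qed
  have c01: "x1 \<noteq> x + a" using noshift[of x 1] x1e by simp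
  have c02: "x2 \<noteq> x + a" using noshift[of x 2] x2e by simp
  have c12: "x2 \<noteq> x1 + a" using noshift[of x1 1] x2_def by (simp add: \<sigma>_def)
  have xa: "u + a \<noteq> u" for u using a0 by simp
  have card6: "card {x, x + a, x1, x1 + a, x2, x2 + a} = 6"
  proof -
    have d1: "x1 + a \<noteq> x" "x2 + a \<noteq> x" "x2 + a \<noteq> x1"
      using c01 swap[of x1 x] apply (metis)
      using c02 swap[of x2 x] apply (metis)
      using c12 swap[of x2 x1] apply (metis)
      done
    have d2: "x + a \<noteq> x1 + a" "x + a \<noteq> x2 + a" "x1 + a \<noteq> x2 + a"
      using n01 n02 n12 by simp_all
    have "distinct [x, x + a, x1, x1 + a, x2, x2 + a]"
    proof -
      note L = d1 d2 n01 n12 n02 c01 c02 c12 xa[of x] xa[of x1] xa[of x2]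
      show ?thesis using L L[THEN not_sym] by (simp only: distinct.simps list.set insert_iff empty_iff simp_thms)
    qed
    from distinct_card[OF this] show ?thesis by simp
  qed
  have "6 \<le> card S" using card_mono[OF finite sub] card6 by simp
  moreover have "card S = c_Delta 1 (poly F) a b" by (simp add: S_def c_Delta_def)
  moreover have "c_Delta 1 (poly F) a b \<le> c_diff_uniformity 1 (poly F)"
  proof -
    have fin: "finite {c_Delta 1 (poly F) a b | a b. a \<noteq> 0 \<or> (1::'a) \<noteq> 1}"
    proof (rule finite_subset)
      show "{c_Delta 1 (poly F) a b | a b. a \<noteq> 0 \<or> (1::'a) \<noteq> 1} \<subseteq> (\<lambda>(a, b). c_Delta 1 (poly F) a b) ` UNIV"
        by auto
    qed simp
    show ?thesis unfolding c_diff_uniformity_def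
      by (rule Max_ge[OF fin]) (use a0 in blast)
  qed
  ultimately show False using assms(7) by linarith
qed

end
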